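(* Let $p$ be an odd prime, $\mathcal O$ the ring of integers of a finite extension of $\mathbb Q_p$, $g\ge0$ and $r\ge0$. Then (1) $\mathrm{Fil}^r(V_g(\mathcal O))$ is stable under the action of $S_0(p)$; (2) if $P\in\mathrm{Fil}^r(V_g(\mathcal O))$, then $P\big|\begin{pmatrix}1&a\\0&p\end{pmatrix}\in p^rV_g(\mathcal O)$ for every integer $a$.
   Context: $V_g(\mathcal O)$: homogeneous degree-$g$ polynomials in $X,Y$ over $\mathcal O$, with right action of integer matrices $(P|\gamma)(X,Y)=P(dX-cY,-bX+aY)$ for $\gamma=\begin{pmatrix}a&b\\c&d\end{pmatrix}$. $S_0(p)=\{\begin{pmatrix}a&b\\c&d\end{pmatrix}\in M_2(\mathbb Z):ad-bc\ne0,\ p\mid c,\ p\nmid a\}$. $\mathrm{Fil}^r(V_g(\mathcal O))=\{\sum_{j=0}^gb_jX^jY^{g-j}\in V_g(\mathcal O):p^{r-j}\mid b_j\text{ for }0\le j\le r-1\}$. *)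

theory Defs
  imports "HOL-Computational_Algebra.Polynomial" "HOL-Computational_Algebra.Primes"
begin

text \<open>A homogeneous polynomial  P = sum_{j=0}^g b_j X^j Y^(g-j)  of degree g over a ring O is
  represented by its coefficient function  b :: nat => O, with b j = 0 for j > g.
  An integer 2x2 matrix (a b; c d) is represented by the quadruple (a, b, c, d).\<close>

definition Vg :: "nat \<Rightarrow> (nat \<Rightarrow> 'a::comm_ring_1) set" where
  "Vg g = {P. \<forall>j>g. P j = 0}"

text \<open>Right action (P|gamma)(X,Y) = P(dX - cY, -bX + aY).  Dehomogenising at Y = 1,
  the coefficient of X^k Y^(g-k) of  sum_j b_j (dX - cY)^j (-bX + aY)^(g-j)
  is the coefficient of x^k of  sum_j b_j (d x - c)^j (a - b x)^(g-j).\<close>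

definition slash :: "nat \<Rightarrow> (nat \<Rightarrow> 'a::comm_ring_1) \<Rightarrow> int \<times> int \<times> int \<times> int \<Rightarrow> (nat \<Rightarrow> 'a)" where
  "slash g P \<gamma> = (case \<gamma> of (a, b, c, d) \<Rightarrow>
     (\<lambda>k. coeff (\<Sum>j\<le>g. smult (P j)
          ([:- of_int c, of_int d:] ^ j * [:of_int a, - of_int b:] ^ (g - j))) k))"

definition S0 :: "nat \<Rightarrow> (int \<times> int \<times> int \<times> int) set" where
  "S0 p = {(a, b, c, d). a * d - b * c \<noteq> 0 \<and> int p dvd c \<and> \<not> int p dvd a}"

definition Fil :: "nat \<Rightarrow> nat \<Rightarrow> nat \<Rightarrow> (nat \<Rightarrow> 'a::comm_ring_1) set" where
  "Fil p r g = {P \<in> Vg g. \<forall>j<r. (of_nat p ^ (r - j)) dvd P j}"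

definition scaled_Vg :: "nat \<Rightarrow> nat \<Rightarrow> nat \<Rightarrow> (nat \<Rightarrow> 'a::comm_ring_1) set" where
  "scaled_Vg p r g = {(\<lambda>j. of_nat p ^ r * Q j) | Q. Q \<in> Vg g}"

end

theory Submission
  imports Defs
begin

definition pdiv :: "'a::comm_ring_1 \<Rightarrow> nat \<Rightarrow> 'a poly \<Rightarrow> bool" where
  "pdiv q n f = (\<forall>k. q ^ (n - k) dvd coeff f k)"

lemma pdiv_0: "pdiv q 0 f" by (simp add: pdiv_def)

lemma pdiv_mono: "pdiv q n f \<Longrightarrow> m \<le> n \<Longrightarrow> pdiv q m f"
  unfolding pdiv_def by (meson diff_le_mono dvd_trans le_imp_power_dvd)

lemma pdiv_mult:
  assumes "pdiv q n1 f" "pdiv q n2 h" shows "pdiv q (n1 + n2) (f * h)"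
  unfolding pdiv_def
proof
  fix k
  have "q ^ (n1 + n2 - k) dvd coeff f i * coeff h (k - i)" if "i \<le> k" for i
  proof -
    have "q ^ (n1 - i) dvd coeff f i" "q ^ (n2 - (k - i)) dvd coeff h (k - i)"
      using assms unfolding pdiv_def by auto
    hence "q ^ (n1 - i) * q ^ (n2 - (k - i)) dvd coeff f i * coeff h (k - i)"
      by (rule mult_dvd_mono)
    moreover have "q ^ (n1 + n2 - k) dvd q ^ (n1 - i) * q ^ (n2 - (k - i))"
      unfolding power_add[symmetric] by (rule le_imp_power_dvd) (use that in linarith)
    ultimately show ?thesis by (meson dvd_trans)
  qed
  thus "q ^ (n1 + n2 - k) dvd coeff (f * h) k"
    unfolding coeff_mult by (intro dvd_sum) auto
qed

lemma pdiv_power: "pdiv q n f \<Longrightarrow> pdiv q (n * j) (f ^ j)"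
proof (induction j)
  case 0 then show ?case by (simp add: pdiv_0)
next
  case (Suc j)
  from pdiv_mult[OF Suc.prems Suc.IH[OF Suc.prems]] show ?case
    by (simp add: algebra_simps)
qed

lemma pdiv_smult: "pdiv q n f \<Longrightarrow> q ^ m dvd c \<Longrightarrow> pdiv q (m + n) (smult c f)"
  unfolding pdiv_def
proof
  fix k assume h: "\<forall>k. q ^ (n - k) dvd coeff f k" "q ^ m dvd c"
  have "q ^ m * q ^ (n - k) dvd c * coeff f k" using h by (simp add: mult_dvd_mono)
  moreover have "q ^ (m + n - k) dvd q ^ m * q ^ (n - k)"
    unfolding power_add[symmetric] by (rule le_imp_power_dvd) linarith
  ultimately show "q ^ (m + n - k) dvd coeff (smult c f) k" by (simp add: dvd_trans)
qed

lemma pdiv_sum: "(\<And>j. j \<in> A \<Longrightarrow> pdiv q n (f j)) \<Longrightarrow> pdiv q n (\<Sum>j\<in>A. f j)"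
  unfolding pdiv_def coeff_sum by (auto intro: dvd_sum)

lemma pdiv_lin: "q dvd c \<Longrightarrow> pdiv q 1 [:c, d:]"
  unfolding pdiv_def by (auto simp: coeff_pCons split: nat.split)

lemma deg_term:
  "degree (\<Sum>j\<le>g. smult (P j) ([:- c, d:] ^ j * [:a, - b:] ^ (g - j))) \<le> g"
proof (rule degree_sum_le)
  fix j assume "j \<in> {..g}"
  hence jg: "j \<le> g" by simp
  have "degree ([:- c, d:] ^ j * [:a, - b:] ^ (g - j)) \<le> degree ([:- c, d:] ^ j) + degree ([:a, - b:] ^ (g - j))"
    by (rule degree_mult_le)
  also have "\<dots> \<le> j * 1 + (g - j) * 1"
    by (intro add_mono order.trans[OF degree_power_le] mult_left_mono) auto
  finally show "degree (smult (P j) ([:- c, d:] ^ j * [:a, - b:] ^ (g - j))) \<le> g"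
    using jg by (simp add: order.trans[OF degree_smult_le])
qed simp

lemma slash_Vg: "slash g P \<gamma> \<in> Vg g"
  unfolding Vg_def slash_def
  by (cases \<gamma>) (auto intro!: coeff_eq_0 dest: le_less_trans[OF deg_term])

theorem lemma6p4:
  fixes p g r :: nat
  assumes "prime p" and "odd p"
  shows "(\<forall>\<gamma>\<in>S0 p. \<forall>P\<in>(Fil p r g :: (nat \<Rightarrow> 'a::{idom, ring_char_0}) set).
            slash g P \<gamma> \<in> Fil p r g)
       \<and> (\<forall>P\<in>(Fil p r g :: (nat \<Rightarrow> 'a) set). \<forall>a::int.
            slash g P (1, a, 0, int p) \<in> scaled_Vg p r g)"
proof (intro conjI ballI allI)
  fix \<gamma> and P :: "nat \<Rightarrow> 'a"
  assume g: "\<gamma> \<in> S0 p" and P: "P \<in> Fil p r g"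
  obtain a b c d where gd: "\<gamma> = (a, b, c, d)" by (cases \<gamma>) auto
  with g have pc: "int p dvd c" by (auto simp: S0_def)
  then obtain k where ck: "c = int p * k" by (auto elim: dvdE)
  have pc': "(of_nat p :: 'a) dvd of_int c" by (simp add: ck)
  let ?q = "of_nat p :: 'a"
  have lin: "pdiv ?q 1 [:- of_int c, of_int d:]" by (rule pdiv_lin) (use pc' in simp)
  have "pdiv ?q r (\<Sum>j\<le>g. smult (P j)
          ([:- of_int c, of_int d:] ^ j * [:of_int a, - of_int b:] ^ (g - j)))"
  proof (rule pdiv_sum)
    fix j
    have pw: "pdiv ?q j ([:- of_int c, of_int d:] ^ j * [:of_int a, - of_int b:] ^ (g - j))"
      using pdiv_mult[OF pdiv_power[OF lin, of j] pdiv_0] by simp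
    show "pdiv ?q r (smult (P j) ([:- of_int c, of_int d:] ^ j * [:of_int a, - of_int b:] ^ (g - j)))"
    proof (cases "j < r")
      case True
      with P have "?q ^ (r - j) dvd P j" by (auto simp: Fil_def)
      from pdiv_smult[OF pw this] True show ?thesis by simp
    next
      case False
      from pdiv_smult[OF pw, of 0 "P j"] have "pdiv ?q j (smult (P j) ([:- of_int c, of_int d:] ^ j * [:of_int a, - of_int b:] ^ (g - j)))" by simp
      then show ?thesis by (rule pdiv_mono) (use False in simp)
    qed
  qed
  then show "slash g P \<gamma> \<in> Fil p r g"
    using slash_Vg[of g P \<gamma>] unfolding Fil_def pdiv_def by (auto simp: gd slash_def)
next
  fix P :: "nat \<Rightarrow> 'a" and a :: int
  assume P: "P \<in> Fil p r g"
  let ?q = "of_nat p :: 'a"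
  let ?f = "\<Sum>j\<le>g. smult (P j) ([:- of_int 0, of_int (int p):] ^ j * [:of_int 1, - of_int a:] ^ (g - j))"
  have "\<forall>k. ?q ^ r dvd coeff ?f k"
    unfolding coeff_sum
  proof (intro allI dvd_sum)
    fix k j
    have e: "[:- of_int 0, of_int (int p):] ^ j = smult (?q ^ j) ([:0, 1:] ^ j)"
      by (simp add: smult_power[symmetric])
    have "?q ^ r dvd P j * ?q ^ j"
    proof (cases "j < r")
      case True
      with P have "?q ^ (r - j) dvd P j" by (auto simp: Fil_def)
      hence "?q ^ (r - j) * ?q ^ j dvd P j * ?q ^ j" by simp
      with True show ?thesis by (simp add: power_add[symmetric])
    next
      case False
      thus ?thesis by (simp add: le_imp_power_dvd)
    qed
    thus "?q ^ r dvd coeff (smult (P j) ([:- of_int 0, of_int (int p):] ^ j * [:of_int 1, - of_int a:] ^ (g - j))) k"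
      unfolding e by (simp add: mult.assoc[symmetric] dvd_mult2)
  qed
  hence "\<forall>k. \<exists>m. coeff ?f k = ?q ^ r * m" by (auto elim: dvdE)
  then obtain Q where Q: "\<And>k. coeff ?f k = ?q ^ r * Q k" by metis
  have nz: "?q ^ r \<noteq> 0" using assms(1) by (simp add: prime_gt_0_nat)
  define Q' where "Q' k = (if k \<le> g then Q k else 0)" for k
  have vg: "slash g P (1, a, 0, int p) \<in> Vg g" by (rule slash_Vg)
  have "slash g P (1, a, 0, int p) = (\<lambda>k. ?q ^ r * Q' k)"
  proof
    fix k
    show "slash g P (1, a, 0, int p) k = ?q ^ r * Q' k"
    proof (cases "k \<le> g")
      case True then show ?thesis using Q[of k] by (simp add: Q'_def slash_def)
    next
      case False then show ?thesis using vg by (simp add: Q'_def Vg_def)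
    qed
  qed
  moreover have "Q' \<in> Vg g" by (simp add: Q'_def Vg_def)
  ultimately show "slash g P (1, a, 0, int p) \<in> scaled_Vg p r g"
    unfolding scaled_Vg_def by blast
qed

end
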